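(* Let $\theta\in(0,1)$ and $(v_n)_{n\ge1}\sim PD(\theta)$. Then for every $0<\delta<1$ and $n\ge1$, $\mathbb E v_n\le e^{-n\delta^2/8}+C(\theta)(1+\delta)^{1/\theta}\,n^{-1/\theta},$ where $C(\theta)=\dfrac{\Gamma(1+\frac1\theta)}{\Gamma(1-\theta)^{1/\theta}}$.
   Context: $PD(\theta)$: the law of $(u_n/\sum_mu_m)_{n\ge1}$ where $u_1>u_2>\dots$ are the points of a Poisson point process on $(0,\infty)$ with intensity $\theta x^{-1-\theta}dx$. *)

theory Defs
  imports "HOL-Probability.Probability"
begin

definition PD_intensity :: "real \<Rightarrow> real measure" where
  "PD_intensity \<theta> = density lborel
     (\<lambda>x. ennreal (indicator {0<..} x * (\<theta> * x powr (-1 - \<theta>))))"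

definition pcount :: "(nat \<Rightarrow> real) \<Rightarrow> real set \<Rightarrow> nat" where
  "pcount u A = card {n. u n \<in> A}"

text \<open>u is the decreasingly ranked enumeration (index 0 = largest point u_1)
  of a Poisson point process on (0,infinity) with intensity theta x^(-1-theta) dx,
  defined on the probability space M.  The Poisson/independence property is
  imposed on Borel sets bounded away from 0 (a generating ring).\<close>
definition ranked_PPP :: "'a measure \<Rightarrow> real \<Rightarrow> ('a \<Rightarrow> nat \<Rightarrow> real) \<Rightarrow> bool" where
  "ranked_PPP M \<theta> u \<longleftrightarrow>
     prob_space M \<and>
     (\<forall>n. (\<lambda>\<omega>. u \<omega> n) \<in> borel_measurable M) \<and>
     (\<forall>\<omega>\<in>space M. (\<forall>n. 0 < u \<omega> (Suc n) \<and> u \<omega> (Suc n) < u \<omega> n)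
                    \<and> (u \<omega> \<longlonglongrightarrow> 0)) \<and>
     (\<forall>(I::nat set) (A::nat \<Rightarrow> real set) e.
        finite I \<and> 0 < e \<and> (\<forall>i\<in>I. A i \<in> sets borel \<and> A i \<subseteq> {e<..}) \<and>
        disjoint_family_on A I \<longrightarrow>
        prob_space.indep_vars M (\<lambda>_. count_space UNIV) (\<lambda>i \<omega>. pcount (u \<omega>) (A i)) I \<and>
        (\<forall>i\<in>I. \<forall>k::nat.
           measure M {\<omega>\<in>space M. pcount (u \<omega>) (A i) = k}
             = (measure (PD_intensity \<theta>) (A i)) ^ k / fact k
               * exp (- measure (PD_intensity \<theta>) (A i))))"

definition PD_coord :: "(nat \<Rightarrow> real) \<Rightarrow> nat \<Rightarrow> real" where
  "PD_coord u n = u (n - 1) / (\<Sum>m. u m)"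

end

theory Submission
  imports Defs
begin


lemma PD_intensity_tail:
  assumes "0 < \<theta>" "0 < t"
  shows "emeasure (PD_intensity \<theta>) {t<..} = ennreal (t powr (-\<theta>))"
proof -
  have hi: "((\<lambda>x. x powr (-1-\<theta>)) has_integral -(t powr (-1-\<theta>+1)) / (-1-\<theta>+1)) {t..}"
    using assms by (intro has_integral_powr_to_inf) auto
  have hi2: "((\<lambda>x. \<theta> * x powr (-1-\<theta>)) has_integral t powr (-\<theta>)) {t..}"
    using has_integral_mult_right[OF hi, of \<theta>] assms by (simp add: field_simps)
  have "emeasure (PD_intensity \<theta>) {t<..} =
      (\<integral>\<^sup>+ x. ennreal (indicator {0<..} x * (\<theta> * x powr (-1 - \<theta>))) * indicator {t<..} x \<partial>lborel)"
    unfolding PD_intensity_def by (subst emeasure_density) auto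
  also have "\<dots> = (\<integral>\<^sup>+ x. ennreal (\<theta> * x powr (-1 - \<theta>)) * indicator {t..} x \<partial>lborel)"
  proof (rule nn_integral_cong_AE)
    show "AE x in lborel. ennreal (indicator {0<..} x * (\<theta> * x powr (-1 - \<theta>))) * indicator {t<..} x =
        ennreal (\<theta> * x powr (-1 - \<theta>)) * indicator {t..} x"
      using AE_lborel_singleton[of t] by eventually_elim (use assms in \<open>auto simp: indicator_def\<close>)
  qed
  also have "\<dots> = ennreal (t powr (-\<theta>))"
    using assms by (intro nn_integral_has_integral_lebesgue'[OF _ hi2]) auto
  finally show ?thesis .
qed



lemmas PPP_D0 = ranked_PPP_def[THEN iffD1]

lemma PPP_prob: "ranked_PPP M \<theta> u \<Longrightarrow> prob_space M"
  by (drule PPP_D0, erule conjunct1)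

lemma PPP_meas: "ranked_PPP M \<theta> u \<Longrightarrow> (\<lambda>\<omega>. u \<omega> n) \<in> borel_measurable M"
  by (drule PPP_D0, drule conjunct2, drule conjunct1, erule spec)

lemma PPP_pw: "ranked_PPP M \<theta> u \<Longrightarrow> \<omega> \<in> space M \<Longrightarrow>
   (\<forall>n. 0 < u \<omega> (Suc n) \<and> u \<omega> (Suc n) < u \<omega> n) \<and> (u \<omega> \<longlonglongrightarrow> 0)"
  by (drule PPP_D0, drule conjunct2, drule conjunct2, drule conjunct1, erule bspec)

lemmas PPP_D4 = PPP_D0[THEN conjunct2, THEN conjunct2, THEN conjunct2]

lemma PPP_indep:
  fixes I :: "nat set"
  assumes "ranked_PPP M \<theta> u" "finite I" "0 < e" "\<And>i. i\<in>I \<Longrightarrow> A i \<in> sets borel"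
    "\<And>i. i\<in>I \<Longrightarrow> A i \<subseteq> {e<..}" "disjoint_family_on A I"
  shows "prob_space.indep_vars M (\<lambda>_. count_space UNIV) (\<lambda>i \<omega>. pcount (u \<omega>) (A i)) I"
proof -
  have "finite I \<and> 0 < e \<and> (\<forall>i\<in>I. A i \<in> sets borel \<and> A i \<subseteq> {e<..}) \<and> disjoint_family_on A I"
    using assms(2-6) by blast
  from PPP_D4[OF assms(1), rule_format, OF this] show ?thesis by (rule conjunct1)
qed

lemma PPP_poisson:
  assumes "ranked_PPP M \<theta> u" "0 < e" "A \<in> sets borel" "A \<subseteq> {e<..}"
  shows "measure M {\<omega>\<in>space M. pcount (u \<omega>) A = k}
             = (measure (PD_intensity \<theta>) A) ^ k / fact k
               * exp (- measure (PD_intensity \<theta>) A)"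
proof -
  have d: "finite {0::nat} \<and> 0 < e \<and> (\<forall>i\<in>{0::nat}. (\<lambda>_. A) i \<in> sets borel \<and> (\<lambda>_. A) i \<subseteq> {e<..}) \<and> disjoint_family_on (\<lambda>_::nat. A) {0}"
    using assms(2-4) by (simp add: disjoint_family_on_def)
  from conjunct2[OF PPP_D4[OF assms(1), rule_format, OF d]] show ?thesis by simp
qed

lemma PPP_count_meas:
  assumes "ranked_PPP M \<theta> u" "0 < e" "A \<in> sets borel" "A \<subseteq> {e<..}"
  shows "(\<lambda>\<omega>. pcount (u \<omega>) A) \<in> measurable M (count_space UNIV)"
proof -
  interpret prob_space M using PPP_prob[OF assms(1)] .
  have "indep_vars (\<lambda>_. count_space UNIV) (\<lambda>i \<omega>. pcount (u \<omega>) ((\<lambda>_::nat. A) i)) {0}"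
    using assms by (intro PPP_indep[of M \<theta> u _ e]) (simp_all add: disjoint_family_on_def)
  thus ?thesis unfolding indep_vars_def by auto
qed

lemma PPP_pgf:
  assumes "ranked_PPP M \<theta> u" "0 < e" "A \<in> sets borel" "A \<subseteq> {e<..}" "0 \<le> s"
  shows "(\<integral>\<^sup>+\<omega>. ennreal (s ^ pcount (u \<omega>) A) \<partial>M)
     = ennreal (exp (measure (PD_intensity \<theta>) A * (s - 1)))"
proof -
  interpret prob_space M using PPP_prob[OF assms(1)] .
  define \<mu> where "\<mu> = measure (PD_intensity \<theta>) A"
  define N where "N \<omega> = pcount (u \<omega>) A" for \<omega>
  have Nm[measurable]: "N \<in> measurable M (count_space UNIV)"
    unfolding N_def by (rule PPP_count_meas[OF assms(1-4)])
  have sets: "{\<omega>\<in>space M. N \<omega> = k} \<in> sets M" for k by measurable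
  have "(\<integral>\<^sup>+\<omega>. ennreal (s ^ N \<omega>) \<partial>M) =
      (\<integral>\<^sup>+\<omega>. (\<Sum>k. ennreal (s^k) * indicator {\<omega>\<in>space M. N \<omega> = k} \<omega>) \<partial>M)"
  proof (rule nn_integral_cong)
    fix \<omega> assume "\<omega> \<in> space M"
    have "(\<lambda>k. ennreal (s^k) * indicator {\<omega>\<in>space M. N \<omega> = k} \<omega>)
        = (\<lambda>k. if k = N \<omega> then ennreal (s^N \<omega>) else 0)"
      using \<open>\<omega> \<in> space M\<close> by (auto simp: indicator_def)
    thus "ennreal (s ^ N \<omega>) = (\<Sum>k. ennreal (s^k) * indicator {\<omega>\<in>space M. N \<omega> = k} \<omega>)"
      using sums_unique[OF sums_single[of "N \<omega>" "\<lambda>_. ennreal (s^N \<omega>)"]] by simp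
  qed
  also have "\<dots> = (\<Sum>k. \<integral>\<^sup>+\<omega>. ennreal (s^k) * indicator {\<omega>\<in>space M. N \<omega> = k} \<omega> \<partial>M)"
    by (rule nn_integral_suminf) (use sets in auto)
  also have "\<dots> = (\<Sum>k. ennreal (s^k * (\<mu> ^ k / fact k * exp (- \<mu>))))"
  proof (rule suminf_cong)
    fix k
    have "(\<integral>\<^sup>+\<omega>. ennreal (s^k) * indicator {\<omega>\<in>space M. N \<omega> = k} \<omega> \<partial>M)
       = ennreal (s^k) * ennreal (\<mu> ^ k / fact k * exp (- \<mu>))"
      using sets PPP_poisson[OF assms(1-4)]
      by (simp add: nn_integral_cmult_indicator emeasure_eq_measure N_def \<mu>_def)
    also have "\<dots> = ennreal (s^k * (\<mu> ^ k / fact k * exp (- \<mu>)))"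
      using assms(5) by (subst ennreal_mult) (auto simp: \<mu>_def)
    finally show "(\<integral>\<^sup>+\<omega>. ennreal (s^k) * indicator {\<omega>\<in>space M. N \<omega> = k} \<omega> \<partial>M)
       = ennreal (s^k * (\<mu> ^ k / fact k * exp (- \<mu>)))" .
  qed
  also have "\<dots> = ennreal (exp (s*\<mu>) * exp (-\<mu>))"
  proof (rule suminf_ennreal_eq)
    show "0 \<le> s ^ k * (\<mu> ^ k / fact k * exp (- \<mu>))" for k
      using assms(5) by (simp add: \<mu>_def)
    have "(\<lambda>k. (s*\<mu>)^k /\<^sub>R fact k * exp (-\<mu>)) sums (exp (s*\<mu>) * exp (-\<mu>))"
      by (intro sums_mult2 exp_converges)
    thus "(\<lambda>k. s ^ k * (\<mu> ^ k / fact k * exp (- \<mu>))) sums (exp (s*\<mu>) * exp (-\<mu>))"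
      by (simp add: power_mult_distrib divide_inverse mult_ac)
  qed
  also have "exp (s*\<mu>) * exp (-\<mu>) = exp (\<mu> * (s - 1))"
    by (simp add: exp_add[symmetric] algebra_simps)
  finally show ?thesis by (simp add: N_def \<mu>_def)
qed



lemma PPP_prod_pgf:
  fixes I :: "nat set"
  assumes "ranked_PPP M \<theta> u" "finite I" "0 < e" "\<And>i. i\<in>I \<Longrightarrow> A i \<in> sets borel"
    "\<And>i. i\<in>I \<Longrightarrow> A i \<subseteq> {e<..}" "disjoint_family_on A I" "\<And>i. i \<in> I \<Longrightarrow> 0 \<le> s i"
  shows "(\<integral>\<^sup>+\<omega>. ennreal (\<Prod>i\<in>I. s i ^ pcount (u \<omega>) (A i)) \<partial>M)
     = ennreal (\<Prod>i\<in>I. exp (measure (PD_intensity \<theta>) (A i) * (s i - 1)))"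
proof -
  interpret prob_space M using PPP_prob[OF assms(1)] .
  have ind: "indep_vars (\<lambda>_. count_space UNIV) (\<lambda>i \<omega>. pcount (u \<omega>) (A i)) I"
    by (rule PPP_indep[OF assms(1-6)])
  have ind2: "indep_vars (\<lambda>_. borel) (\<lambda>i \<omega>. (\<lambda>n. ennreal (s i ^ n)) (pcount (u \<omega>) (A i))) I"
    by (rule indep_vars_compose2[OF ind]) simp
  have "(\<integral>\<^sup>+\<omega>. ennreal (\<Prod>i\<in>I. s i ^ pcount (u \<omega>) (A i)) \<partial>M)
      = (\<Prod>i\<in>I. \<integral>\<^sup>+\<omega>. ennreal (s i ^ pcount (u \<omega>) (A i)) \<partial>M)"
    using indep_vars_nn_integral[OF assms(2) ind2] assms(7) by (simp add: prod_ennreal)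
  also have "\<dots> = (\<Prod>i\<in>I. ennreal (exp (measure (PD_intensity \<theta>) (A i) * (s i - 1))))"
    by (rule prod.cong[OF refl], rule PPP_pgf[OF assms(1,3)]) (use assms in auto)
  also have "\<dots> = ennreal (\<Prod>i\<in>I. exp (measure (PD_intensity \<theta>) (A i) * (s i - 1)))"
    by (simp add: prod_ennreal)
  finally show ?thesis .
qed



lemma pcount_finite:
  fixes f :: "nat \<Rightarrow> real"
  assumes "f \<longlonglongrightarrow> 0" "0 < e" "A \<subseteq> {e<..}"
  shows "finite {n. f n \<in> A}"
proof -
  from assms(1,2) have "eventually (\<lambda>n. norm (f n - 0) < e) sequentially"
    using LIMSEQ_D[OF assms(1,2)] by (auto simp: eventually_sequentially)
  then obtain N where N: "\<And>n. n \<ge> N \<Longrightarrow> \<bar>f n\<bar> < e" by (auto simp: eventually_sequentially)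
  have "{n. f n \<in> A} \<subseteq> {..<N}"
  proof
    fix n assume "n \<in> {n. f n \<in> A}"
    then have "f n > e" using assms(3) by auto
    then show "n \<in> {..<N}" using N[of n] by (cases "n \<ge> N") auto
  qed
  thus ?thesis by (rule finite_subset) simp
qed

lemma weighted_count_le_sum:
  fixes I :: "nat set" and f :: "nat \<Rightarrow> real"
  assumes "f \<longlonglongrightarrow> 0" "\<And>n. 0 \<le> f n" "summable f" "finite I" "0 < e"
    "\<And>i. i\<in>I \<Longrightarrow> A i \<subseteq> {e<..}" "disjoint_family_on A I"
    "\<And>i x. i \<in> I \<Longrightarrow> x \<in> A i \<Longrightarrow> c i \<le> x"
  shows "(\<Sum>i\<in>I. c i * real (pcount f (A i))) \<le> suminf f"
proof -
  define B where "B i = {n. f n \<in> A i}" for i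
  have finB: "finite (B i)" if "i \<in> I" for i
    unfolding B_def using assms that by (intro pcount_finite) auto
  have "(\<Sum>i\<in>I. c i * real (pcount f (A i))) = (\<Sum>i\<in>I. \<Sum>n\<in>B i. c i)"
    by (simp add: pcount_def B_def mult.commute)
  also have "\<dots> \<le> (\<Sum>i\<in>I. \<Sum>n\<in>B i. f n)"
    by (intro sum_mono) (use assms(8) in \<open>auto simp: B_def\<close>)
  also have "\<dots> = (\<Sum>n\<in>(\<Union>i\<in>I. B i). f n)"
  proof (rule sum.UNION_disjoint[symmetric])
    show "finite I" by fact
    show "\<forall>i\<in>I. finite (B i)" using finB by auto
    show "\<forall>i\<in>I. \<forall>j\<in>I. i \<noteq> j \<longrightarrow> B i \<inter> B j = {}"
      using assms(7) by (auto simp: B_def disjoint_family_on_def)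
  qed
  also have "\<dots> \<le> suminf f"
    by (rule sum_le_suminf) (use assms finB in auto)
  finally show ?thesis .
qed



lemma tail_nn_integral:
  assumes "0 < \<theta>" "0 < t"
  shows "(\<integral>\<^sup>+ x. ennreal (\<theta> * x powr (-1 - \<theta>)) * indicator {t..} x \<partial>lborel) = ennreal (t powr (-\<theta>))"
proof -
  have hi: "((\<lambda>x. x powr (-1-\<theta>)) has_integral -(t powr (-1-\<theta>+1)) / (-1-\<theta>+1)) {t..}"
    using assms by (intro has_integral_powr_to_inf) auto
  have hi2: "((\<lambda>x. \<theta> * x powr (-1-\<theta>)) has_integral t powr (-\<theta>)) {t..}"
    using has_integral_mult_right[OF hi, of \<theta>] assms by (simp add: field_simps)
  show ?thesis
    using assms by (intro nn_integral_has_integral_lebesgue'[OF _ hi2]) auto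
qed

lemma one_minus_exp_integral:
  assumes "0 < l" "0 < x"
  shows "(\<integral>\<^sup>+ s. ennreal (l * exp (-l * s)) * indicator {0<..x} s \<partial>lborel) = ennreal (1 - exp (-l * x))"
proof -
  have hi: "((\<lambda>s. l * exp (-l * s)) has_integral ((- exp (-l * x)) - (- exp (-l * 0)))) {0..x}"
    using assms
    by (intro fundamental_theorem_of_calculus)
       (auto intro!: derivative_eq_intros simp flip: has_real_derivative_iff_has_vector_derivative)
  have "(\<integral>\<^sup>+ s. ennreal (l * exp (-l * s)) * indicator {0<..x} s \<partial>lborel)
     = (\<integral>\<^sup>+ s. ennreal (l * exp (-l * s)) * indicator {0..x} s \<partial>lborel)"
    by (rule nn_integral_cong_AE)
       (use AE_lborel_singleton[of 0] in \<open>eventually_elim, auto simp: indicator_def\<close>)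
  also have "\<dots> = ennreal (1 - exp (-l * x))"
    using assms by (subst nn_integral_has_integral_lebesgue'[OF _ hi]) auto
  finally show ?thesis .
qed

lemma gamma_scaled:
  assumes "0 < \<theta>" "\<theta> < 1" "0 < l"
  shows "(\<integral>\<^sup>+ s. ennreal (indicator {0<..} s * (l * exp (-l * s) * s powr (-\<theta>))) \<partial>lborel)
     = ennreal (Gamma (1 - \<theta>) * l powr \<theta>)"
proof -
  have G: "Gamma (1-\<theta>) = (\<integral>\<^sup>+t. ennreal (indicator {0..} t * t powr (1 - \<theta> - 1) / exp t) \<partial>lborel)"
    using assms by (intro Gamma_conv_nn_integral_real) auto
  also have "\<dots> = ennreal l * (\<integral>\<^sup>+s. ennreal (indicator {0..} (0 + l * s) * (0 + l * s) powr (1 - \<theta> - 1) / exp (0 + l * s)) \<partial>lborel)"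
    using nn_integral_real_affine[of "\<lambda>t. ennreal (indicator {0..} t * t powr (1 - \<theta> - 1) / exp t)" l 0] assms
    by simp
  also have "(\<integral>\<^sup>+s. ennreal (indicator {0..} (0 + l * s) * (0 + l * s) powr (1 - \<theta> - 1) / exp (0 + l * s)) \<partial>lborel)
     = (\<integral>\<^sup>+s. ennreal (l powr (-\<theta>-1)) * ennreal (indicator {0<..} s * (l * exp (-l * s) * s powr (-\<theta>))) \<partial>lborel)"
  proof (rule nn_integral_cong_AE)
    show "AE s in lborel. ennreal (indicator {0..} (0 + l * s) * (0 + l * s) powr (1 - \<theta> - 1) / exp (0 + l * s)) =
      ennreal (l powr (-\<theta>-1)) * ennreal (indicator {0<..} s * (l * exp (-l * s) * s powr (-\<theta>)))"
      using AE_lborel_singleton[of 0]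
    proof eventually_elim
      case (elim s)
      show ?case
      proof (cases "s > 0")
        case True
        have "(l * s) powr (-\<theta>) / exp (l * s) = l powr (-\<theta>-1) * (l * exp (-l * s) * s powr (-\<theta>))"
          using True assms by (simp add: powr_mult powr_diff exp_minus field_simps powr_minus)
        then show ?thesis using True assms
          by (simp add: ennreal_mult[symmetric] indicator_def zero_le_mult_iff)
      next
        case False
        then have "s < 0" using elim by auto
        then show ?thesis using assms by (simp add: indicator_def mult_pos_neg not_le)
      qed
    qed
  qed
  also have "\<dots> = ennreal (l powr (-\<theta>-1)) * (\<integral>\<^sup>+s. ennreal (indicator {0<..} s * (l * exp (-l * s) * s powr (-\<theta>))) \<partial>lborel)"
    by (rule nn_integral_cmult) simp
  finally have "ennreal (Gamma (1-\<theta>)) = ennreal (l * l powr (-\<theta>-1)) * (\<integral>\<^sup>+s. ennreal (indicator {0<..} s * (l * exp (-l * s) * s powr (-\<theta>))) \<partial>lborel)"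
    using assms by (simp add: ennreal_mult mult.assoc)
  also have "l * l powr (-\<theta>-1) = l powr (-\<theta>)"
    using assms by (simp add: powr_diff powr_minus field_simps)
  finally have eq: "ennreal (Gamma (1-\<theta>)) = ennreal (l powr (-\<theta>)) * (\<integral>\<^sup>+s. ennreal (indicator {0<..} s * (l * exp (-l * s) * s powr (-\<theta>))) \<partial>lborel)" .
  have "ennreal (Gamma (1 - \<theta>) * l powr \<theta>) = ennreal (l powr \<theta>) * ennreal (Gamma (1-\<theta>))"
    using assms Gamma_real_pos[of "1-\<theta>"] by (simp add: ennreal_mult mult.commute)
  also have "\<dots> = ennreal (l powr \<theta> * l powr (-\<theta>)) * (\<integral>\<^sup>+s. ennreal (indicator {0<..} s * (l * exp (-l * s) * s powr (-\<theta>))) \<partial>lborel)"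
    unfolding eq by (simp add: ennreal_mult mult.assoc)
  also have "l powr \<theta> * l powr (-\<theta>) = 1"
    using assms by (simp add: powr_minus)
  finally show ?thesis by simp
qed



lemma levy_integral:
  assumes "0 < \<theta>" "\<theta> < 1" "0 < l"
  shows "(\<integral>\<^sup>+x. ennreal (1 - exp (-l * x)) \<partial>PD_intensity \<theta>) = ennreal (Gamma (1 - \<theta>) * l powr \<theta>)"
proof -
  define G where "G x s = ennreal (if 0 < s \<and> s \<le> x then \<theta> * x powr (-1-\<theta>) * (l * exp (- l * s)) else 0)" for x s :: real
  have Gm: "case_prod G \<in> borel_measurable (lborel \<Otimes>\<^sub>M lborel)"
    unfolding G_def by measurable
  have "(\<integral>\<^sup>+x. ennreal (1 - exp (-l * x)) \<partial>PD_intensity \<theta>)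
     = (\<integral>\<^sup>+x. ennreal (indicator {0<..} x * (\<theta> * x powr (-1 - \<theta>))) * ennreal (1 - exp (-l * x)) \<partial>lborel)"
    unfolding PD_intensity_def by (subst nn_integral_density) auto
  also have "\<dots> = (\<integral>\<^sup>+x. (\<integral>\<^sup>+s. G x s \<partial>lborel) \<partial>lborel)"
  proof (rule nn_integral_cong)
    fix x :: real
    show "ennreal (indicator {0<..} x * (\<theta> * x powr (-1 - \<theta>))) * ennreal (1 - exp (-l * x)) = (\<integral>\<^sup>+s. G x s \<partial>lborel)"
    proof (cases "0 < x")
      case True
      have "ennreal (indicator {0<..} x * (\<theta> * x powr (-1 - \<theta>))) * ennreal (1 - exp (-l * x))
         = ennreal (\<theta> * x powr (-1 - \<theta>)) * (\<integral>\<^sup>+ s. ennreal (l * exp (-l * s)) * indicator {0<..x} s \<partial>lborel)"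
        using True one_minus_exp_integral[OF assms(3) True] by simp
      also have "\<dots> = (\<integral>\<^sup>+ s. ennreal (\<theta> * x powr (-1 - \<theta>)) * (ennreal (l * exp (-l * s)) * indicator {0<..x} s) \<partial>lborel)"
        by (rule nn_integral_cmult[symmetric]) simp
      also have "\<dots> = (\<integral>\<^sup>+s. G x s \<partial>lborel)"
        by (rule nn_integral_cong)
           (use assms True in \<open>auto simp: G_def indicator_def ennreal_mult[symmetric]\<close>)
      finally show ?thesis .
    next
      case False
      then have "G x s = 0" for s unfolding G_def by auto
      then show ?thesis using False by simp
    qed
  qed
  also have "\<dots> = (\<integral>\<^sup>+s. (\<integral>\<^sup>+x. G x s \<partial>lborel) \<partial>lborel)"
    by (rule lborel_pair.Fubini'[OF Gm, symmetric])
  also have "\<dots> = (\<integral>\<^sup>+ s. ennreal (indicator {0<..} s * (l * exp (-l * s) * s powr (-\<theta>))) \<partial>lborel)"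
  proof (rule nn_integral_cong)
    fix s :: real
    show "(\<integral>\<^sup>+x. G x s \<partial>lborel) = ennreal (indicator {0<..} s * (l * exp (-l * s) * s powr (-\<theta>)))"
    proof (cases "0 < s")
      case True
      have "(\<integral>\<^sup>+x. G x s \<partial>lborel) = (\<integral>\<^sup>+x. ennreal (l * exp (-l * s)) * (ennreal (\<theta> * x powr (-1 - \<theta>)) * indicator {s..} x) \<partial>lborel)"
        by (rule nn_integral_cong)
           (use assms True in \<open>auto simp: G_def indicator_def ennreal_mult[symmetric] mult_ac\<close>)
      also have "\<dots> = ennreal (l * exp (-l * s)) * (\<integral>\<^sup>+x. ennreal (\<theta> * x powr (-1 - \<theta>)) * indicator {s..} x \<partial>lborel)"
        by (rule nn_integral_cmult) simp
      also have "\<dots> = ennreal (l * exp (-l * s)) * ennreal (s powr (-\<theta>))"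
        using tail_nn_integral[OF assms(1) True] by simp
      finally show ?thesis using True assms by (simp add: ennreal_mult[symmetric])
    next
      case False
      then have "G x s = 0" for x unfolding G_def by auto
      then show ?thesis using False by simp
    qed
  qed
  also have "\<dots> = ennreal (Gamma (1 - \<theta>) * l powr \<theta>)"
    by (rule gamma_scaled[OF assms])
  finally show ?thesis .
qed



definition Aint :: "nat \<Rightarrow> nat \<Rightarrow> real set" where
  "Aint m j = {real j / 2^m ..< (real j + 1) / 2^m}"

definition Fl :: "nat \<Rightarrow> real \<Rightarrow> int" where
  "Fl m x = \<lfloor>x * 2^m\<rfloor>"

definition stepf :: "real \<Rightarrow> nat \<Rightarrow> real \<Rightarrow> ennreal" where
  "stepf l m x = (if 1 \<le> Fl m x \<and> Fl m x < int m * 2^m then ennreal (1 - exp (-l * (real_of_int (Fl m x) / 2^m))) else 0)"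

lemma Aint_iff: "x \<in> Aint m j \<longleftrightarrow> Fl m x = int j"
proof -
  have "x \<in> Aint m j \<longleftrightarrow> real j \<le> x * 2^m \<and> x * 2^m < real j + 1"
    by (simp add: Aint_def field_simps)
  also have "\<dots> \<longleftrightarrow> Fl m x = int j"
    unfolding Fl_def by (simp add: floor_eq_iff)
  finally show ?thesis .
qed

lemma Aint_sub: "j \<ge> 1 \<Longrightarrow> Aint m j \<subseteq> {1/2^(Suc m)<..}"
proof
  fix x assume j: "j \<ge> 1" and x: "x \<in> Aint m j"
  then have "real j / 2^m \<le> x" by (simp add: Aint_def)
  moreover have "1/2^(Suc m) < real j / 2^m"
    using j by (simp add: field_simps)
  ultimately show "x \<in> {1/2^(Suc m)<..}" by simp
qed

lemma Aint_disj: "disjoint_family_on (Aint m) I"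
  unfolding disjoint_family_on_def by (auto simp: Aint_iff)

lemma Aint_borel: "Aint m j \<in> sets borel"
  by (simp add: Aint_def)

lemma stepf_sum:
  "(\<Sum>j\<in>{1..<m*2^m}. ennreal (1 - exp (-l * (real j / 2^m))) * indicator (Aint m j) x) = stepf l m x"
proof -
  have "(\<Sum>j\<in>{1..<m*2^m}. ennreal (1 - exp (-l * (real j / 2^m))) * indicator (Aint m j) x)
     = (\<Sum>j\<in>{1..<m*2^m}. if int j = Fl m x then ennreal (1 - exp (-l * (real j / 2^m))) else 0)"
    by (intro sum.cong) (auto simp: Aint_iff indicator_def)
  also have "\<dots> = stepf l m x"
  proof (cases "0 \<le> Fl m x")
    case True
    then obtain k where k: "Fl m x = int k" by (metis nonneg_eq_int)
    have "(\<Sum>j\<in>{1..<m*2^m}. if int j = Fl m x then ennreal (1 - exp (-l * (real j / 2^m))) else 0)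
      = (\<Sum>j\<in>{1..<m*2^m}. if j = k then ennreal (1 - exp (-l * (real j / 2^m))) else 0)"
      using k by (intro sum.cong) auto
    also have "\<dots> = (if k \<in> {1..<m*2^m} then ennreal (1 - exp (-l * (real k / 2^m))) else 0)"
      by (subst sum.delta) auto
    also have "\<dots> = stepf l m x"
    proof -
      have "int k < int m * 2^m \<longleftrightarrow> k < m * 2^m"
        by (metis of_nat_less_iff of_nat_mult of_nat_numeral of_nat_power)
      then show ?thesis unfolding stepf_def k by auto
    qed
    finally show ?thesis .
  next
    case False
    then show ?thesis by (auto simp: stepf_def intro!: sum.neutral)
  qed
  finally show ?thesis .
qed

lemma Fl_mono: "2 * Fl m x \<le> Fl (Suc m) x"
proof -
  have "real_of_int (2 * \<lfloor>x * 2^m\<rfloor>) \<le> x * 2^Suc m"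
    using of_int_floor_le[of "x * 2^m"] by simp
  thus ?thesis unfolding Fl_def by (simp add: le_floor_iff)
qed

lemma stepf_mono:
  assumes "0 \<le> l"
  shows "stepf l m x \<le> stepf l (Suc m) x"
proof (cases "1 \<le> Fl m x \<and> Fl m x < int m * 2^m")
  case True
  have a: "1 \<le> Fl (Suc m) x" using Fl_mono[of m x] True by linarith
  have "x * 2^m < real m * 2^m"
    using True unfolding Fl_def by (simp add: floor_less_iff)
  then have "x < real m" by simp
  then have "x * 2^Suc m < (real m + 1) * 2^Suc m" by simp
  then have b: "Fl (Suc m) x < int (Suc m) * 2^Suc m"
    unfolding Fl_def by (simp add: floor_less_iff)
  have "real_of_int (2 * Fl m x) \<le> real_of_int (Fl (Suc m) x)"
    using Fl_mono[of m x] by linarith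
  then have c: "real_of_int (Fl m x) / 2^m \<le> real_of_int (Fl (Suc m) x) / 2^Suc m"
    by (simp add: field_simps)
  have "1 - exp (-l * (real_of_int (Fl m x) / 2^m)) \<le> 1 - exp (-l * (real_of_int (Fl (Suc m) x) / 2^Suc m))"
    using mult_left_mono[OF c assms] by simp
  then show ?thesis using True a b unfolding stepf_def by (simp add: ennreal_leI)
qed (auto simp: stepf_def[of l m x])

lemma stepf_incseq: "0 \<le> l \<Longrightarrow> incseq (\<lambda>m. stepf l m x)"
  by (rule incseq_SucI) (rule stepf_mono)

lemma stepf_lim:
  assumes "0 \<le> l"
  shows "(\<lambda>m. stepf l m x) \<longlonglongrightarrow> ennreal (1 - exp (-l * x))"
proof (cases "0 < x")
  case True
  obtain N1 :: nat where N1: "x < real N1" using reals_Archimedean2 by blast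
  obtain N2 :: nat where N2: "1 / x < 2 ^ N2" using real_arch_pow[of 2 "1/x"] by auto
  have ev: "stepf l m x = ennreal (1 - exp (-l * (real_of_int (Fl m x) / 2^m)))" if m: "m \<ge> max N1 N2" for m
  proof -
    have "(2::real)^N2 \<le> 2^m" using m by (intro power_increasing) auto
    with N2 have "1 / x < 2^m" by linarith
    then have "1 \<le> x * 2^m" using True by (simp add: field_simps)
    then have a: "1 \<le> Fl m x" unfolding Fl_def by (simp add: le_floor_iff)
    have "x < real m" using N1 m by linarith
    then have "x * 2^m < real m * 2^m" by simp
    then have b: "Fl m x < int m * 2^m" unfolding Fl_def by (simp add: floor_less_iff)
    show ?thesis using a b by (simp add: stepf_def)
  qed
  have lo: "x - (1/2)^m \<le> real_of_int (Fl m x) / 2^m" for m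
  proof -
    have "x * 2^m - 1 \<le> real_of_int (Fl m x)" unfolding Fl_def by linarith
    then have "(x * 2^m - 1) / 2^m \<le> real_of_int (Fl m x) / 2^m"
      by (intro divide_right_mono) auto
    then show ?thesis by (simp add: diff_divide_distrib power_divide)
  qed
  have hi: "real_of_int (Fl m x) / 2^m \<le> x" for m
  proof -
    have "real_of_int (Fl m x) \<le> x * 2^m" unfolding Fl_def by linarith
    then show ?thesis by (simp add: field_simps)
  qed
  have "(\<lambda>m. (1/2::real)^m) \<longlonglongrightarrow> 0"
    by (rule LIMSEQ_power_zero) simp
  then have l1: "(\<lambda>m. x - (1/2::real)^m) \<longlonglongrightarrow> x"
    using tendsto_diff[OF tendsto_const[of x]] by fastforce
  have lim: "(\<lambda>m. real_of_int (Fl m x) / 2^m) \<longlonglongrightarrow> x"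
  proof (rule tendsto_sandwich[OF _ _ l1 tendsto_const])
    show "\<forall>\<^sub>F m in sequentially. x - (1/2)^m \<le> real_of_int (Fl m x) / 2^m"
      using lo by (intro always_eventually) auto
    show "\<forall>\<^sub>F m in sequentially. real_of_int (Fl m x) / 2^m \<le> x"
      using hi by (intro always_eventually) auto
  qed
  have "(\<lambda>m. ennreal (1 - exp (-l * (real_of_int (Fl m x) / 2^m)))) \<longlonglongrightarrow> ennreal (1 - exp (-l * x))"
  proof (rule tendsto_ennrealI)
    have "(\<lambda>m. -l * (real_of_int (Fl m x) / 2^m)) \<longlonglongrightarrow> -l * x"
      by (rule tendsto_mult[OF tendsto_const lim])
    then have "(\<lambda>m. exp (-l * (real_of_int (Fl m x) / 2^m))) \<longlonglongrightarrow> exp (-l * x)"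
      by (rule tendsto_exp)
    then show "(\<lambda>m. 1 - exp (-l * (real_of_int (Fl m x) / 2^m))) \<longlonglongrightarrow> 1 - exp (-l * x)"
      by (rule tendsto_diff[OF tendsto_const])
  qed
  then show ?thesis
  proof (rule Lim_transform_eventually)
    show "\<forall>\<^sub>F m in sequentially. ennreal (1 - exp (-l * (real_of_int (Fl m x) / 2^m))) = stepf l m x"
      unfolding eventually_sequentially using ev by metis
  qed
next
  case False
  have "Fl m x < 1" for m
  proof -
    have "x * 2^m \<le> 0" using False by (simp add: mult_nonpos_nonneg)
    then show ?thesis unfolding Fl_def by (simp add: floor_less_iff)
  qed
  then have "stepf l m x = 0" for m unfolding stepf_def by (metis not_le)
  moreover have "1 - exp (-l * x) \<le> 0" using False assms by (simp add: mult_nonneg_nonpos)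
  then have "ennreal (1 - exp (-l * x)) = 0" by (simp add: ennreal_eq_0_iff)
  ultimately show ?thesis by simp
qed



definition rsum :: "real \<Rightarrow> real \<Rightarrow> nat \<Rightarrow> real" where
  "rsum \<theta> l m = (\<Sum>j\<in>{1..<m*2^m}. (1 - exp (-l * (real j / 2^m))) * measure (PD_intensity \<theta>) (Aint m j))"

lemma sets_PD[simp, measurable_cong]: "sets (PD_intensity \<theta>) = sets borel"
  by (simp add: PD_intensity_def)

lemma Aint_emeasure_finite:
  assumes "0 < \<theta>" "j \<ge> 1"
  shows "emeasure (PD_intensity \<theta>) (Aint m j) \<noteq> top"
proof -
  have "emeasure (PD_intensity \<theta>) (Aint m j) \<le> emeasure (PD_intensity \<theta>) {1/2^(Suc m)<..}"
    using Aint_sub[OF assms(2)] by (intro emeasure_mono) auto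
  also have "\<dots> = ennreal ((1/2^(Suc m)) powr (-\<theta>))"
    using assms by (intro PD_intensity_tail) auto
  finally show ?thesis by (auto simp: top_unique)
qed

lemma stepf_meas: "stepf l m \<in> borel_measurable (PD_intensity \<theta>)"
proof -
  have "stepf l m = (\<lambda>x. \<Sum>j\<in>{1..<m*2^m}. ennreal (1 - exp (-l * (real j / 2^m))) * indicator (Aint m j) x)"
    using stepf_sum by auto
  also have "\<dots> \<in> borel_measurable (PD_intensity \<theta>)"
    using Aint_borel by measurable
  finally show ?thesis .
qed

lemma stepf_integral:
  assumes "0 < \<theta>" "0 \<le> l"
  shows "(\<integral>\<^sup>+x. stepf l m x \<partial>PD_intensity \<theta>) = ennreal (rsum \<theta> l m)"
proof -
  have "(\<integral>\<^sup>+x. stepf l m x \<partial>PD_intensity \<theta>)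
     = (\<integral>\<^sup>+x. (\<Sum>j\<in>{1..<m*2^m}. ennreal (1 - exp (-l * (real j / 2^m))) * indicator (Aint m j) x) \<partial>PD_intensity \<theta>)"
    using stepf_sum by simp
  also have "\<dots> = (\<Sum>j\<in>{1..<m*2^m}. (\<integral>\<^sup>+x. ennreal (1 - exp (-l * (real j / 2^m))) * indicator (Aint m j) x \<partial>PD_intensity \<theta>))"
    by (rule nn_integral_sum) (use Aint_borel in measurable)
  also have "\<dots> = (\<Sum>j\<in>{1..<m*2^m}. ennreal ((1 - exp (-l * (real j / 2^m))) * measure (PD_intensity \<theta>) (Aint m j)))"
  proof (rule sum.cong[OF refl])
    fix j assume j: "j \<in> {1..<m*2^m}"
    have "(\<integral>\<^sup>+x. ennreal (1 - exp (-l * (real j / 2^m))) * indicator (Aint m j) x \<partial>PD_intensity \<theta>)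
       = ennreal (1 - exp (-l * (real j / 2^m))) * emeasure (PD_intensity \<theta>) (Aint m j)"
      by (rule nn_integral_cmult_indicator) (simp add: Aint_borel)
    also have "\<dots> = ennreal (1 - exp (-l * (real j / 2^m))) * ennreal (measure (PD_intensity \<theta>) (Aint m j))"
      using Aint_emeasure_finite[OF assms(1)] j by (simp add: emeasure_eq_ennreal_measure)
    also have "\<dots> = ennreal ((1 - exp (-l * (real j / 2^m))) * measure (PD_intensity \<theta>) (Aint m j))"
      using assms by (subst ennreal_mult) (auto simp: mult_nonneg_nonneg)
    finally show "(\<integral>\<^sup>+x. ennreal (1 - exp (-l * (real j / 2^m))) * indicator (Aint m j) x \<partial>PD_intensity \<theta>)
       = ennreal ((1 - exp (-l * (real j / 2^m))) * measure (PD_intensity \<theta>) (Aint m j))" .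
  qed
  also have "\<dots> = ennreal (rsum \<theta> l m)"
    unfolding rsum_def using assms by (subst sum_ennreal) (auto simp: mult_nonneg_nonneg)
  finally show ?thesis .
qed

lemma rsum_nonneg: "0 \<le> l \<Longrightarrow> 0 \<le> rsum \<theta> l m"
  unfolding rsum_def by (intro sum_nonneg mult_nonneg_nonneg) auto

lemma rsum_lim:
  assumes "0 < \<theta>" "\<theta> < 1" "0 < l"
  shows "rsum \<theta> l \<longlonglongrightarrow> Gamma (1 - \<theta>) * l powr \<theta>"
proof -
  have inc: "incseq (\<lambda>m. stepf l m)"
    using stepf_incseq[of l] assms by (auto simp: incseq_def le_fun_def)
  have sup: "(SUP m. stepf l m x) = ennreal (1 - exp (-l * x))" for x
    using LIMSEQ_unique[OF LIMSEQ_SUP[OF stepf_incseq[of l x]] stepf_lim[of l x]] assms by simp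
  have "(\<lambda>m. \<integral>\<^sup>+x. stepf l m x \<partial>PD_intensity \<theta>) \<longlonglongrightarrow> (SUP m. \<integral>\<^sup>+x. stepf l m x \<partial>PD_intensity \<theta>)"
    by (rule LIMSEQ_SUP) (use inc in \<open>auto simp: incseq_def intro!: nn_integral_mono simp: le_fun_def\<close>)
  also have "(SUP m. \<integral>\<^sup>+x. stepf l m x \<partial>PD_intensity \<theta>) = (\<integral>\<^sup>+x. (SUP m. stepf l m x) \<partial>PD_intensity \<theta>)"
    by (rule nn_integral_monotone_convergence_SUP[symmetric, OF inc stepf_meas])
  also have "\<dots> = ennreal (Gamma (1 - \<theta>) * l powr \<theta>)"
    unfolding sup by (rule levy_integral[OF assms])
  finally have "(\<lambda>m. ennreal (rsum \<theta> l m)) \<longlonglongrightarrow> ennreal (Gamma (1 - \<theta>) * l powr \<theta>)"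
    using stepf_integral[OF assms(1)] assms by simp
  moreover have "0 \<le> Gamma (1 - \<theta>) * l powr \<theta>"
    using assms Gamma_real_pos[of "1-\<theta>"] by simp
  ultimately show ?thesis
    using rsum_nonneg[of l \<theta>] assms by (subst (asm) tendsto_ennreal_iff) auto
qed



lemma PPP_pos: "ranked_PPP M \<theta> u \<Longrightarrow> \<omega> \<in> space M \<Longrightarrow> 0 < u \<omega> n"
proof -
  assume a: "ranked_PPP M \<theta> u" "\<omega> \<in> space M"
  from PPP_pw[OF a] have h: "\<And>n. 0 < u \<omega> (Suc n) \<and> u \<omega> (Suc n) < u \<omega> n" by blast
  show ?thesis
  proof (cases n)
    case 0 then show ?thesis using h[of 0] by simp
  next
    case (Suc k) then show ?thesis using h[of k] by simp
  qed
qed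

lemma PPP_summable_pred:
  assumes "ranked_PPP M \<theta> u"
  shows "Measurable.pred M (\<lambda>\<omega>. summable (u \<omega>))"
proof -
  have [measurable]: "(\<lambda>\<omega>. u \<omega> n) \<in> borel_measurable M" for n by (rule PPP_meas[OF assms])
  have "{\<omega>\<in>space M. Cauchy (\<lambda>n. \<Sum>i<n. u \<omega> i)} \<in> sets M"
    by measurable
  moreover have "summable (u \<omega>) \<longleftrightarrow> Cauchy (\<lambda>n. \<Sum>i<n. u \<omega> i)" for \<omega>
    by (simp add: summable_iff_convergent Cauchy_convergent_iff)
  ultimately show ?thesis unfolding pred_def by simp
qed

lemma PPP_W_meas:
  assumes "ranked_PPP M \<theta> u" "f \<in> borel_measurable borel"
  shows "(\<lambda>\<omega>. if summable (u \<omega>) then f (suminf (u \<omega>)) else (0::real)) \<in> borel_measurable M"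
proof -
  have [measurable]: "(\<lambda>\<omega>. u \<omega> n) \<in> borel_measurable M" for n by (rule PPP_meas[OF assms(1)])
  have [measurable]: "Measurable.pred M (\<lambda>\<omega>. summable (u \<omega>))" by (rule PPP_summable_pred[OF assms(1)])
  have [measurable]: "f \<in> borel_measurable borel" by (rule assms(2))
  show ?thesis by measurable
qed

lemma laplace_bound_m:
  assumes "ranked_PPP M \<theta> u" "0 < \<theta>" "0 \<le> l"
  shows "(\<integral>\<^sup>+\<omega>. ennreal (if summable (u \<omega>) then exp (-l * suminf (u \<omega>)) else 0) \<partial>M)
     \<le> ennreal (exp (- rsum \<theta> l m))"
proof -
  define I where "I = {1..<m*2^m}"
  define s where "s j = exp (-l * (real j / 2^m))" for j :: nat
  have "(\<integral>\<^sup>+\<omega>. ennreal (if summable (u \<omega>) then exp (-l * suminf (u \<omega>)) else 0) \<partial>M)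
      \<le> (\<integral>\<^sup>+\<omega>. ennreal (\<Prod>j\<in>I. s j ^ pcount (u \<omega>) (Aint m j)) \<partial>M)"
  proof (rule nn_integral_mono)
    fix \<omega> assume \<omega>: "\<omega> \<in> space M"
    show "ennreal (if summable (u \<omega>) then exp (-l * suminf (u \<omega>)) else 0)
       \<le> ennreal (\<Prod>j\<in>I. s j ^ pcount (u \<omega>) (Aint m j))"
    proof (cases "summable (u \<omega>)")
      case True
      have le: "(\<Sum>j\<in>I. real j / 2^m * real (pcount (u \<omega>) (Aint m j))) \<le> suminf (u \<omega>)"
      proof (rule weighted_count_le_sum)
        show "u \<omega> \<longlonglongrightarrow> 0" using PPP_pw[OF assms(1) \<omega>] by blast
        show "0 \<le> u \<omega> n" for n using PPP_pos[OF assms(1) \<omega>] less_imp_le by blast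
        show "summable (u \<omega>)" by fact
        show "finite I" by (simp add: I_def)
        show "0 < (1::real) / 2^Suc m" by simp
        show "Aint m j \<subseteq> {1/2^Suc m<..}" if "j \<in> I" for j
          using that Aint_sub by (auto simp: I_def)
        show "disjoint_family_on (Aint m) I" by (rule Aint_disj)
        show "real j / 2^m \<le> x" if "j \<in> I" "x \<in> Aint m j" for j x
          using that by (simp add: Aint_def)
      qed
      have "(\<Prod>j\<in>I. s j ^ pcount (u \<omega>) (Aint m j)) = (\<Prod>j\<in>I. exp (real (pcount (u \<omega>) (Aint m j)) * (-l * (real j / 2^m))))"
        by (intro prod.cong refl) (simp add: s_def exp_of_nat_mult[symmetric])
      also have "\<dots> = exp (\<Sum>j\<in>I. real (pcount (u \<omega>) (Aint m j)) * (-l * (real j / 2^m)))"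
        by (simp add: exp_sum I_def)
      also have "(\<Sum>j\<in>I. real (pcount (u \<omega>) (Aint m j)) * (-l * (real j / 2^m)))
          = -l * (\<Sum>j\<in>I. real j / 2^m * real (pcount (u \<omega>) (Aint m j)))"
        by (simp add: sum_distrib_left mult_ac)
      finally have "(\<Prod>j\<in>I. s j ^ pcount (u \<omega>) (Aint m j)) = exp (-l * (\<Sum>j\<in>I. real j / 2^m * real (pcount (u \<omega>) (Aint m j))))" .
      moreover have "exp (-l * suminf (u \<omega>)) \<le> exp (-l * (\<Sum>j\<in>I. real j / 2^m * real (pcount (u \<omega>) (Aint m j))))"
        using mult_left_mono[OF le assms(3)] by simp
      ultimately show ?thesis using True by (simp add: ennreal_leI)
    qed simp
  qed
  also have "\<dots> = ennreal (\<Prod>j\<in>I. exp (measure (PD_intensity \<theta>) (Aint m j) * (s j - 1)))"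
  proof (rule PPP_prod_pgf[OF assms(1)])
    show "finite I" by (simp add: I_def)
    show "0 < (1::real) / 2^Suc m" by simp
    show "Aint m j \<in> sets borel" for j by (rule Aint_borel)
    show "Aint m j \<subseteq> {1/2^Suc m<..}" if "j \<in> I" for j
      using that Aint_sub by (auto simp: I_def)
    show "disjoint_family_on (Aint m) I" by (rule Aint_disj)
    show "0 \<le> s j" for j by (simp add: s_def)
  qed
  also have "(\<Prod>j\<in>I. exp (measure (PD_intensity \<theta>) (Aint m j) * (s j - 1))) = exp (- rsum \<theta> l m)"
    unfolding rsum_def I_def s_def sum_negf[symmetric]
    by (subst exp_sum[symmetric]) (auto intro!: arg_cong[where f=exp] sum.cong simp: algebra_simps)
  finally show ?thesis .
qed

lemma laplace_bound:
  assumes "ranked_PPP M \<theta> u" "0 < \<theta>" "\<theta> < 1" "0 < l"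
  shows "(\<integral>\<^sup>+\<omega>. ennreal (if summable (u \<omega>) then exp (-l * suminf (u \<omega>)) else 0) \<partial>M)
     \<le> ennreal (exp (- (Gamma (1 - \<theta>) * l powr \<theta>)))"
proof (rule tendsto_le[OF sequentially_bot])
  show "(\<lambda>m. ennreal (exp (- rsum \<theta> l m))) \<longlonglongrightarrow> ennreal (exp (- (Gamma (1 - \<theta>) * l powr \<theta>)))"
    by (intro tendsto_ennrealI tendsto_intros rsum_lim assms)
  show "(\<lambda>m. \<integral>\<^sup>+\<omega>. ennreal (if summable (u \<omega>) then exp (-l * suminf (u \<omega>)) else 0) \<partial>M) \<longlonglongrightarrow>
    (\<integral>\<^sup>+\<omega>. ennreal (if summable (u \<omega>) then exp (-l * suminf (u \<omega>)) else 0) \<partial>M)" by simp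
  show "\<forall>\<^sub>F m in sequentially. (\<integral>\<^sup>+\<omega>. ennreal (if summable (u \<omega>) then exp (-l * suminf (u \<omega>)) else 0) \<partial>M) \<le> ennreal (exp (- rsum \<theta> l m))"
    using laplace_bound_m[OF assms(1,2)] assms(4) by simp
qed



lemma exp_tail_nn:
  "(\<integral>\<^sup>+z. ennreal (exp (-z)) * indicator {c..} z \<partial>lborel) = ennreal (exp (-c))"
proof -
  have "((\<lambda>z::real. exp (-1*z)) has_integral exp (-1*c)/1) {c..}"
    by (rule has_integral_exp_minus_to_infinity) simp
  then have "((\<lambda>z::real. exp (-z)) has_integral exp (-c)) {c..}" by simp
  then show ?thesis by (intro nn_integral_has_integral_lebesgue') auto
qed

lemma powr_le_iff_root:
  fixes \<theta> l y :: real
  assumes "0 < \<theta>" "0 \<le> l" "0 \<le> y"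
  shows "l powr \<theta> \<le> y \<longleftrightarrow> l \<le> y powr (1/\<theta>)"
proof
  assume h: "l powr \<theta> \<le> y"
  have "(l powr \<theta>) powr (1/\<theta>) \<le> y powr (1/\<theta>)"
    using powr_mono2[of "1/\<theta>" "l powr \<theta>" y] assms h by simp
  then show "l \<le> y powr (1/\<theta>)" using assms by (simp add: powr_powr)
next
  assume h: "l \<le> y powr (1/\<theta>)"
  have "l powr \<theta> \<le> (y powr (1/\<theta>)) powr \<theta>"
    using powr_mono2[of \<theta> l "y powr (1/\<theta>)"] assms h by simp
  then show "l powr \<theta> \<le> y" using assms by (simp add: powr_powr)
qed

lemma stretched_exp_integral:
  assumes "0 < \<theta>" "0 < a"
  shows "(\<integral>\<^sup>+l. ennreal (indicator {0..} l * exp (-(a * l powr \<theta>))) \<partial>lborel)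
       = ennreal (Gamma (1 + 1/\<theta>) * a powr (-1/\<theta>))"
proof -
  define K where "K l z = ennreal (if 0 \<le> l \<and> a * l powr \<theta> \<le> z then exp (-z) else 0)" for l z :: real
  have Km: "case_prod K \<in> borel_measurable (lborel \<Otimes>\<^sub>M lborel)"
    unfolding K_def by measurable
  have "(\<integral>\<^sup>+l. ennreal (indicator {0..} l * exp (-(a * l powr \<theta>))) \<partial>lborel) = (\<integral>\<^sup>+l. (\<integral>\<^sup>+z. K l z \<partial>lborel) \<partial>lborel)"
  proof (rule nn_integral_cong)
    fix l :: real
    show "ennreal (indicator {0..} l * exp (-(a * l powr \<theta>))) = (\<integral>\<^sup>+z. K l z \<partial>lborel)"
    proof (cases "0 \<le> l")
      case True
      have "(\<integral>\<^sup>+z. K l z \<partial>lborel) = (\<integral>\<^sup>+z. ennreal (exp (-z)) * indicator {a * l powr \<theta>..} z \<partial>lborel)"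
        by (rule nn_integral_cong) (use True in \<open>auto simp: K_def indicator_def\<close>)
      also have "\<dots> = ennreal (exp (-(a * l powr \<theta>)))" by (rule exp_tail_nn)
      finally show ?thesis using True by simp
    next
      case False
      then show ?thesis by (simp add: K_def)
    qed
  qed
  also have "\<dots> = (\<integral>\<^sup>+z. (\<integral>\<^sup>+l. K l z \<partial>lborel) \<partial>lborel)"
    by (rule lborel_pair.Fubini'[OF Km, symmetric])
  also have "\<dots> = (\<integral>\<^sup>+z. ennreal (indicator {0..} z * z powr (1 + 1/\<theta> - 1) / exp z) * ennreal (a powr (-1/\<theta>)) \<partial>lborel)"
  proof (rule nn_integral_cong)
    fix z :: real
    show "(\<integral>\<^sup>+l. K l z \<partial>lborel) = ennreal (indicator {0..} z * z powr (1 + 1/\<theta> - 1) / exp z) * ennreal (a powr (-1/\<theta>))"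
    proof (cases "0 \<le> z")
      case True
      have "(\<integral>\<^sup>+l. K l z \<partial>lborel) = (\<integral>\<^sup>+l. ennreal (exp (-z)) * indicator {0..(z/a) powr (1/\<theta>)} l \<partial>lborel)"
      proof (rule nn_integral_cong)
        fix l :: real
        have "0 \<le> l \<and> a * l powr \<theta> \<le> z \<longleftrightarrow> l \<in> {0..(z/a) powr (1/\<theta>)}"
        proof (cases "0 \<le> l")
          case True
          have "a * l powr \<theta> \<le> z \<longleftrightarrow> l powr \<theta> \<le> z / a" using assms by (simp add: field_simps)
          also have "\<dots> \<longleftrightarrow> l \<le> (z/a) powr (1/\<theta>)"
            using assms True \<open>0 \<le> z\<close> by (intro powr_le_iff_root) auto
          finally show ?thesis using True by auto
        qed auto
        note iff = this
        show "K l z = ennreal (exp (-z)) * indicator {0..(z/a) powr (1/\<theta>)} l"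
          unfolding K_def indicator_def iff by simp
      qed
      also have "\<dots> = ennreal (exp (-z)) * ennreal ((z/a) powr (1/\<theta>))"
        by (subst nn_integral_cmult_indicator) auto
      also have "\<dots> = ennreal (indicator {0..} z * z powr (1 + 1/\<theta> - 1) / exp z) * ennreal (a powr (-1/\<theta>))"
      proof -
        have "exp (-z) * (z/a) powr (1/\<theta>) = z powr (1 + 1/\<theta> - 1) / exp z * a powr (-1/\<theta>)"
        proof -
          have e1: "(z/a) powr (1/\<theta>) = z powr (1/\<theta>) / a powr (1/\<theta>)"
            using assms True by (simp add: powr_divide)
          have e2: "a powr (-1/\<theta>) = 1 / a powr (1/\<theta>)"
            using assms by (simp add: powr_minus_divide)
          have e3: "1 + 1/\<theta> - 1 = 1/\<theta>" by simp
          show ?thesis unfolding e1 e2 e3 by (simp add: exp_minus field_simps)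
        qed
        then show ?thesis using True assms by (simp add: ennreal_mult[symmetric])
      qed
      finally show ?thesis .
    next
      case False
      have "0 \<le> a * l powr \<theta>" for l using assms by simp
      then have "\<not> (0 \<le> l \<and> a * l powr \<theta> \<le> z)" for l using False by (meson order_trans)
      then have "K l z = 0" for l unfolding K_def by simp
      then show ?thesis using False by simp
    qed
  qed
  also have "\<dots> = (\<integral>\<^sup>+z. ennreal (indicator {0..} z * z powr (1 + 1/\<theta> - 1) / exp z) \<partial>lborel) * ennreal (a powr (-1/\<theta>))"
    by (rule nn_integral_multc) simp
  also have "\<dots> = ennreal (Gamma (1 + 1/\<theta>)) * ennreal (a powr (-1/\<theta>))"
    using assms by (subst Gamma_conv_nn_integral_real[symmetric]) (auto simp: add_pos_pos)
  also have "\<dots> = ennreal (Gamma (1 + 1/\<theta>) * a powr (-1/\<theta>))"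
  proof -
    have "0 < 1 + 1/\<theta>" using assms by (simp add: add_pos_pos)
    then have "0 \<le> Gamma (1 + 1/\<theta>)" using Gamma_real_pos less_imp_le by blast
    then show ?thesis by (subst ennreal_mult) auto
  qed
  finally show ?thesis .
qed



lemma inv_exp_integral:
  assumes "0 < S"
  shows "(\<integral>\<^sup>+l. ennreal (exp (-l * S)) * indicator {0..} l \<partial>lborel) = ennreal (1 / S)"
proof -
  have "((\<lambda>l::real. exp (-S*l)) has_integral exp (-S*0)/S) {0..}"
    by (rule has_integral_exp_minus_to_infinity) fact
  then have "((\<lambda>l::real. exp (-l*S)) has_integral 1/S) {0..}" by (simp add: mult.commute)
  then show ?thesis by (intro nn_integral_has_integral_lebesgue') auto
qed

lemma inv_sum_bound:
  assumes "ranked_PPP M \<theta> u" "0 < \<theta>" "\<theta> < 1"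
  shows "(\<integral>\<^sup>+\<omega>. ennreal (if summable (u \<omega>) then 1 / suminf (u \<omega>) else 0) \<partial>M)
     \<le> ennreal (Gamma (1 + 1/\<theta>) * Gamma (1 - \<theta>) powr (-1/\<theta>))"
proof -
  interpret prob_space M by (rule PPP_prob[OF assms(1)])
  interpret P: pair_sigma_finite M lborel ..
  have [measurable]: "(\<lambda>\<omega>. u \<omega> n) \<in> borel_measurable M" for n by (rule PPP_meas[OF assms(1)])
  have [measurable]: "Measurable.pred M (\<lambda>\<omega>. summable (u \<omega>))" by (rule PPP_summable_pred[OF assms(1)])
  define H where "H \<omega> l = ennreal (if 0 \<le> l \<and> summable (u \<omega>) then exp (-l * suminf (u \<omega>)) else 0)" for \<omega> l
  have Hm: "case_prod H \<in> borel_measurable (M \<Otimes>\<^sub>M lborel)"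
    unfolding H_def by measurable
  have "(\<integral>\<^sup>+\<omega>. ennreal (if summable (u \<omega>) then 1 / suminf (u \<omega>) else 0) \<partial>M)
      = (\<integral>\<^sup>+\<omega>. (\<integral>\<^sup>+l. H \<omega> l \<partial>lborel) \<partial>M)"
  proof (rule nn_integral_cong)
    fix \<omega> assume \<omega>: "\<omega> \<in> space M"
    show "ennreal (if summable (u \<omega>) then 1 / suminf (u \<omega>) else 0) = (\<integral>\<^sup>+l. H \<omega> l \<partial>lborel)"
    proof (cases "summable (u \<omega>)")
      case True
      have pos: "0 < suminf (u \<omega>)"
        using True PPP_pos[OF assms(1) \<omega>] by (intro suminf_pos) auto
      have "(\<integral>\<^sup>+l. H \<omega> l \<partial>lborel) = (\<integral>\<^sup>+l. ennreal (exp (-l * suminf (u \<omega>))) * indicator {0..} l \<partial>lborel)"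
        by (rule nn_integral_cong) (simp add: H_def True indicator_def)
      also have "\<dots> = ennreal (1 / suminf (u \<omega>))" by (rule inv_exp_integral[OF pos])
      finally show ?thesis using True by simp
    next
      case False
      then show ?thesis by (simp add: H_def)
    qed
  qed
  also have "\<dots> = (\<integral>\<^sup>+l. (\<integral>\<^sup>+\<omega>. H \<omega> l \<partial>M) \<partial>lborel)"
    by (rule P.Fubini'[OF Hm, symmetric])
  also have "\<dots> \<le> (\<integral>\<^sup>+l. ennreal (indicator {0..} l * exp (-(Gamma (1 - \<theta>) * l powr \<theta>))) \<partial>lborel)"
  proof (rule nn_integral_mono_AE)
    show "AE l in lborel. (\<integral>\<^sup>+\<omega>. H \<omega> l \<partial>M) \<le> ennreal (indicator {0..} l * exp (-(Gamma (1 - \<theta>) * l powr \<theta>)))"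
      using AE_lborel_singleton[of 0]
    proof eventually_elim
      case (elim l)
      show ?case
      proof (cases "0 < l")
        case True
        have "(\<integral>\<^sup>+\<omega>. H \<omega> l \<partial>M) = (\<integral>\<^sup>+\<omega>. ennreal (if summable (u \<omega>) then exp (-l * suminf (u \<omega>)) else 0) \<partial>M)"
          using True by (simp add: H_def)
        also have "\<dots> \<le> ennreal (exp (- (Gamma (1 - \<theta>) * l powr \<theta>)))"
          by (rule laplace_bound[OF assms True])
        finally show ?thesis using True by simp
      next
        case False
        then have "l < 0" using elim by simp
        then show ?thesis by (simp add: H_def)
      qed
    qed
  qed
  also have "\<dots> = ennreal (Gamma (1 + 1/\<theta>) * Gamma (1 - \<theta>) powr (-1/\<theta>))"
    using assms Gamma_real_pos[of "1 - \<theta>"] by (intro stretched_exp_integral) auto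
  finally show ?thesis .
qed



lemma ln_lower_2:
  fixes x :: real
  assumes "0 \<le> x"
  shows "2 * x / (2 + x) \<le> ln (1 + x)"
proof -
  define f where "f y = ln (1 + y) - 2 * y / (2 + y)" for y :: real
  have "f 0 \<le> f x"
  proof (rule DERIV_nonneg_imp_nondecreasing[OF assms])
    fix y :: real assume y: "0 \<le> y" "y \<le> x"
    have d1: "((\<lambda>y. ln (1 + y)) has_real_derivative (1 / (1 + y))) (at y)"
      using y by (auto intro!: derivative_eq_intros)
    have d2: "((\<lambda>y. 2 * y / (2 + y)) has_real_derivative (4 / (2 + y)^2)) (at y)"
      using y by (auto intro!: derivative_eq_intros simp: power2_eq_square field_simps)
    have "DERIV f y :> 1 / (1 + y) - 4 / (2 + y)^2"
      unfolding f_def by (rule DERIV_diff[OF d1 d2])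
    moreover have "1 / (1 + y) - 4 / (2 + y)^2 = y^2 / ((1 + y) * (2 + y)^2)"
    proof -
      have a: "1 + y \<noteq> 0" "(2 + y)^2 \<noteq> 0" using y by auto
      have "1 / (1 + y) - 4 / (2 + y)^2 = ((2+y)^2 - 4 * (1+y)) / ((1 + y) * (2 + y)^2)"
        using a by (simp add: diff_frac_eq)
      also have "(2+y)^2 - 4 * (1+y) = y^2" by (simp add: power2_eq_square algebra_simps)
      finally show ?thesis .
    qed
    moreover have "0 \<le> y^2 / ((1 + y) * (2 + y)^2)" using y by simp
    ultimately show "\<exists>d. DERIV f y :> d \<and> 0 \<le> d" by metis
  qed
  then show ?thesis by (simp add: f_def)
qed

lemma chernoff_real:
  fixes \<delta> :: real
  assumes "0 < \<delta>" "\<delta> < 1"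
  shows "\<delta> / (1 + \<delta>) - ln (1 + \<delta>) \<le> - (\<delta> ^ 2) / 8"
proof -
  have a: "2 * \<delta> / (2 + \<delta>) \<le> ln (1 + \<delta>)" using ln_lower_2 assms by simp
  have "2 * \<delta> / (2 + \<delta>) - \<delta> / (1 + \<delta>) = \<delta> ^ 2 / ((2 + \<delta>) * (1 + \<delta>))"
    using assms by (simp add: field_simps power2_eq_square)
  moreover have "\<delta> ^ 2 / 8 \<le> \<delta> ^ 2 / ((2 + \<delta>) * (1 + \<delta>))"
  proof (rule divide_left_mono)
    have "(2 + \<delta>) * (1 + \<delta>) \<le> 3 * 2" using assms by (intro mult_mono) auto
    then show "(2 + \<delta>) * (1 + \<delta>) \<le> 8" by simp
  qed (use assms in auto)
  ultimately show ?thesis using a by linarith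
qed



lemma downclosed_eq:
  fixes S :: "nat set"
  assumes "finite S" "\<And>m k. m \<in> S \<Longrightarrow> k \<le> m \<Longrightarrow> k \<in> S"
  shows "m \<in> S \<longleftrightarrow> m < card S"
proof
  assume "m \<in> S"
  then have "{..m} \<subseteq> S" using assms(2) by auto
  then have "card {..m} \<le> card S" using assms(1) by (rule card_mono[rotated])
  then show "m < card S" by simp
next
  assume m: "m < card S"
  show "m \<in> S"
  proof (rule ccontr)
    assume "m \<notin> S"
    then have "S \<subseteq> {..<m}" using assms(2) by (metis lessThan_iff not_le subsetI)
    then have "card S \<le> m" using card_mono[of "{..<m}" S] by simp
    then show False using m by simp
  qed
qed

lemma decr_seq:
  fixes f :: "nat \<Rightarrow> real"
  assumes "\<And>n. f (Suc n) < f n" "k \<le> m"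
  shows "f m \<le> f k"
proof -
  have "decseq f" by (rule decseq_SucI) (use assms(1) less_imp_le in blast)
  then show ?thesis using assms(2) by (simp add: decseq_def)
qed

lemma count_iff:
  fixes f :: "nat \<Rightarrow> real"
  assumes "\<And>n. f (Suc n) < f n" "f \<longlonglongrightarrow> 0" "0 < t"
  shows "t < f m \<longleftrightarrow> m < pcount f {t<..}"
proof -
  have fin: "finite {n. f n \<in> {t<..}}"
    by (rule pcount_finite[OF assms(2,3)]) simp
  have "m \<in> {n. f n \<in> {t<..}} \<longleftrightarrow> m < card {n. f n \<in> {t<..}}"
  proof (rule downclosed_eq[OF fin])
    fix a b assume "a \<in> {n. f n \<in> {t<..}}" "b \<le> a"
    then show "b \<in> {n. f n \<in> {t<..}}" using decr_seq[of f b a] assms(1) by fastforce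
  qed
  then show ?thesis by (simp add: pcount_def)
qed

lemma PPP_count_iff:
  assumes "ranked_PPP M \<theta> u" "\<omega> \<in> space M" "0 < t"
  shows "t < u \<omega> m \<longleftrightarrow> m < pcount (u \<omega>) {t<..}"
  using PPP_pw[OF assms(1,2)] by (intro count_iff assms(3)) auto

lemma PPP_tail_measure:
  assumes "0 < \<theta>" "0 < t"
  shows "measure (PD_intensity \<theta>) {t<..} = t powr (-\<theta>)"
  using PD_intensity_tail[OF assms] by (simp add: measure_def)

lemma tail_prob:
  assumes "ranked_PPP M \<theta> u" "0 < \<theta>" "0 < \<delta>" "\<delta> < 1" "1 \<le> n"
  defines "t \<equiv> ((1 + \<delta>) / real n) powr (1/\<theta>)"
  shows "emeasure M {\<omega>\<in>space M. t < u \<omega> (n - 1)} \<le> ennreal (exp (- real n * \<delta>\<^sup>2 / 8))"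
proof -
  interpret prob_space M by (rule PPP_prob[OF assms(1)])
  have t: "0 < t" using assms by (simp add: t_def)
  have mu: "measure (PD_intensity \<theta>) {t<..} = real n / (1 + \<delta>)"
  proof -
    have "t powr (-\<theta>) = ((1 + \<delta>) / real n) powr (1/\<theta> * -\<theta>)"
      unfolding t_def by (simp add: powr_powr)
    also have "\<dots> = ((1 + \<delta>) / real n) powr (-1)" using assms by simp
    also have "\<dots> = real n / (1 + \<delta>)" using assms by (simp add: powr_minus_divide)
    finally show ?thesis using PPP_tail_measure[OF assms(2) t] by simp
  qed
  define s where "s = 1 + \<delta>"
  have s: "1 < s" using assms by (simp add: s_def)
  have "emeasure M {\<omega>\<in>space M. t < u \<omega> (n - 1)} = (\<integral>\<^sup>+\<omega>. indicator {\<omega>\<in>space M. t < u \<omega> (n - 1)} \<omega> \<partial>M)"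
  proof (subst nn_integral_indicator)
    have [measurable]: "(\<lambda>\<omega>. u \<omega> m) \<in> borel_measurable M" for m by (rule PPP_meas[OF assms(1)])
    show "{\<omega>\<in>space M. t < u \<omega> (n - 1)} \<in> sets M" by measurable
  qed simp
  also have "\<dots> \<le> (\<integral>\<^sup>+\<omega>. ennreal (1 / s^n) * ennreal (s ^ pcount (u \<omega>) {t<..}) \<partial>M)"
  proof (rule nn_integral_mono)
    fix \<omega> assume \<omega>: "\<omega> \<in> space M"
    show "indicator {\<omega>\<in>space M. t < u \<omega> (n - 1)} \<omega> \<le> ennreal (1 / s^n) * ennreal (s ^ pcount (u \<omega>) {t<..})"
    proof (cases "t < u \<omega> (n - 1)")
      case True
      then have "n - 1 < pcount (u \<omega>) {t<..}" using PPP_count_iff[OF assms(1) \<omega> t] by simp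
      then have "n \<le> pcount (u \<omega>) {t<..}" using assms(5) by simp
      then have "s^n \<le> s ^ pcount (u \<omega>) {t<..}" using s by (intro power_increasing) auto
      then have "1 \<le> 1 / s^n * s ^ pcount (u \<omega>) {t<..}" using s by (simp add: field_simps)
      then show ?thesis using True \<omega> s by (simp add: ennreal_mult[symmetric])
    qed simp
  qed
  also have "\<dots> = ennreal (1 / s^n) * (\<integral>\<^sup>+\<omega>. ennreal (s ^ pcount (u \<omega>) {t<..}) \<partial>M)"
    using PPP_count_meas[OF assms(1) t _ order_refl]
    by (intro nn_integral_cmult) simp
  also have "\<dots> = ennreal (1 / s^n) * ennreal (exp (measure (PD_intensity \<theta>) {t<..} * (s - 1)))"
    using PPP_pgf[OF assms(1) t _ order_refl, of s] s by simp
  also have "\<dots> = ennreal (exp (real n * (\<delta> / (1 + \<delta>) - ln (1 + \<delta>))))"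
  proof -
    have "s ^ n = exp (real n * ln s)" using s by (simp add: exp_of_nat_mult)
    then have "1 / s^n * exp (real n / (1 + \<delta>) * (s - 1)) = exp (real n * (\<delta> / (1 + \<delta>) - ln (1 + \<delta>)))"
      by (simp add: s_def exp_diff[symmetric] right_diff_distrib exp_minus field_simps)
    then show ?thesis using s mu by (simp add: ennreal_mult[symmetric])
  qed
  also have "\<dots> \<le> ennreal (exp (- real n * \<delta>\<^sup>2 / 8))"
  proof -
    have "real n * (\<delta> / (1 + \<delta>) - ln (1 + \<delta>)) \<le> real n * (- (\<delta> ^ 2) / 8)"
      using chernoff_real[OF assms(3,4)] by (intro mult_left_mono) auto
    then show ?thesis by (intro ennreal_leI) simp
  qed
  finally show ?thesis .
qed



lemma PPP_mean:
  assumes "ranked_PPP M \<theta> u" "0 < e" "A \<in> sets borel" "A \<subseteq> {e<..}"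
  shows "(\<integral>\<^sup>+\<omega>. ennreal (real (pcount (u \<omega>) A)) \<partial>M) = ennreal (measure (PD_intensity \<theta>) A)"
proof -
  interpret prob_space M using PPP_prob[OF assms(1)] .
  define \<mu> where "\<mu> = measure (PD_intensity \<theta>) A"
  define N where "N \<omega> = pcount (u \<omega>) A" for \<omega>
  have Nm[measurable]: "N \<in> measurable M (count_space UNIV)"
    unfolding N_def by (rule PPP_count_meas[OF assms(1-4)])
  have sets: "{\<omega>\<in>space M. N \<omega> = k} \<in> sets M" for k by measurable
  have "(\<integral>\<^sup>+\<omega>. ennreal (real (N \<omega>)) \<partial>M) =
      (\<integral>\<^sup>+\<omega>. (\<Sum>k. ennreal (real k) * indicator {\<omega>\<in>space M. N \<omega> = k} \<omega>) \<partial>M)"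
  proof (rule nn_integral_cong)
    fix \<omega> assume "\<omega> \<in> space M"
    have "(\<lambda>k. ennreal (real k) * indicator {\<omega>\<in>space M. N \<omega> = k} \<omega>)
        = (\<lambda>k. if k = N \<omega> then ennreal (real (N \<omega>)) else 0)"
      using \<open>\<omega> \<in> space M\<close> by (auto simp: indicator_def)
    thus "ennreal (real (N \<omega>)) = (\<Sum>k. ennreal (real k) * indicator {\<omega>\<in>space M. N \<omega> = k} \<omega>)"
      using sums_unique[OF sums_single[of "N \<omega>" "\<lambda>_. ennreal (real (N \<omega>))"]] by simp
  qed
  also have "\<dots> = (\<Sum>k. \<integral>\<^sup>+\<omega>. ennreal (real k) * indicator {\<omega>\<in>space M. N \<omega> = k} \<omega> \<partial>M)"
    by (rule nn_integral_suminf) (use sets in auto)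
  also have "\<dots> = (\<Sum>k. ennreal (real k * (\<mu> ^ k / fact k * exp (- \<mu>))))"
  proof (rule suminf_cong)
    fix k
    have "(\<integral>\<^sup>+\<omega>. ennreal (real k) * indicator {\<omega>\<in>space M. N \<omega> = k} \<omega> \<partial>M)
       = ennreal (real k) * ennreal (\<mu> ^ k / fact k * exp (- \<mu>))"
      using sets PPP_poisson[OF assms(1-4)]
      by (simp add: nn_integral_cmult_indicator emeasure_eq_measure N_def \<mu>_def)
    also have "\<dots> = ennreal (real k * (\<mu> ^ k / fact k * exp (- \<mu>)))"
      by (subst ennreal_mult) (auto simp: \<mu>_def)
    finally show "(\<integral>\<^sup>+\<omega>. ennreal (real k) * indicator {\<omega>\<in>space M. N \<omega> = k} \<omega> \<partial>M)
       = ennreal (real k * (\<mu> ^ k / fact k * exp (- \<mu>)))" .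
  qed
  also have "\<dots> = ennreal (\<mu> * exp \<mu> * exp (-\<mu>))"
  proof (rule suminf_ennreal_eq)
    show "0 \<le> real k * (\<mu> ^ k / fact k * exp (- \<mu>))" for k
      by (simp add: \<mu>_def)
    have "(\<lambda>k. \<mu> * (\<mu>^k /\<^sub>R fact k) * exp (-\<mu>)) sums (\<mu> * exp \<mu> * exp (-\<mu>))"
      by (intro sums_mult2 sums_mult exp_converges)
    moreover have "real (Suc k) * (\<mu> ^ Suc k / fact (Suc k) * exp (- \<mu>)) = \<mu> * (\<mu>^k /\<^sub>R fact k) * exp (-\<mu>)" for k
      by (simp add: divide_simps del: of_nat_Suc)
    ultimately have "(\<lambda>k. real (Suc k) * (\<mu> ^ Suc k / fact (Suc k) * exp (- \<mu>))) sums (\<mu> * exp \<mu> * exp (-\<mu>))"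
      by simp
    then show "(\<lambda>k. real k * (\<mu> ^ k / fact k * exp (- \<mu>))) sums (\<mu> * exp \<mu> * exp (-\<mu>))"
      by (subst (asm) sums_Suc_iff) simp
  qed
  also have "\<mu> * exp \<mu> * exp (-\<mu>) = \<mu>" by (simp add: exp_minus)
  finally show ?thesis by (simp add: N_def \<mu>_def)
qed



lemma summable_from_counts:
  fixes f :: "nat \<Rightarrow> real"
  assumes dec: "\<And>n. f (Suc n) < f n" and pos: "\<And>n. 0 < f n" and lim: "f \<longlonglongrightarrow> 0"
    and fin: "(\<Sum>k. ennreal ((1/2)^k * real (pcount f {1/2^Suc k<..}))) \<noteq> \<infinity>"
  shows "summable f"
proof -
  define C where "C k = pcount f {1/2^k<..}" for k
  define c where "c k = (1/2)^k * real (C (Suc k))" for k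
  have c_nn: "0 \<le> c k" for k by (simp add: c_def)
  have sc: "summable c"
  proof (rule summable_suminf_not_top)
    show "0 \<le> c k" for k by (rule c_nn)
    show "(\<Sum>k. ennreal (c k)) \<noteq> top" using fin unfolding c_def C_def by simp
  qed
  have iff: "1/2^k < f m \<longleftrightarrow> m < C k" for k m
    unfolding C_def by (rule count_iff[OF dec lim]) simp
  have Cmono: "C k \<le> C (Suc k)" for k
  proof -
    have "C k < Suc (C k)" by simp
    show ?thesis
    proof (rule ccontr)
      assume "\<not> C k \<le> C (Suc k)"
      then have "C (Suc k) < C k" by simp
      then have "1/2^k < f (C (Suc k))" using iff by blast
      moreover have "(1::real)/2^Suc k < 1/2^k" by (simp add: field_simps)
      ultimately have "C (Suc k) < C (Suc k)" using iff[of "Suc k" "C (Suc k)"] by linarith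
      then show False by simp
    qed
  qed
  have key: "(\<Sum>n<C K. f n) \<le> f 0 * real (C 0) + (\<Sum>k<K. c k)" for K
  proof (induction K)
    case 0
    have "(\<Sum>n<C 0. f n) \<le> (\<Sum>n<C 0. f 0)"
      using decr_seq[of f 0] dec by (intro sum_mono) auto
    then show ?case by (simp add: mult.commute)
  next
    case (Suc K)
    have "(\<Sum>n<C (Suc K). f n) = (\<Sum>n<C K. f n) + (\<Sum>n\<in>{C K..<C (Suc K)}. f n)"
      using sum.atLeastLessThan_concat[of 0 "C K" "C (Suc K)" f] Cmono[of K] by (simp only: atLeast0LessThan)
    also have "(\<Sum>n\<in>{C K..<C (Suc K)}. f n) \<le> (\<Sum>n\<in>{C K..<C (Suc K)}. (1/2)^K)"
    proof (rule sum_mono)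
      fix n assume "n \<in> {C K..<C (Suc K)}"
      then have "\<not> 1/2^K < f n" using iff[of K n] by auto
      then show "f n \<le> (1/2)^K" by (simp add: power_one_over)
    qed
    also have "\<dots> = real (C (Suc K) - C K) * (1/2)^K" by simp
    also have "\<dots> \<le> c K" unfolding c_def by (simp add: mult.commute)
    finally show ?case using Suc.IH by simp
  qed
  show ?thesis
  proof (rule bounded_imp_summable)
    show "0 \<le> f n" for n using pos less_imp_le by blast
    fix N
    obtain K where K: "(1/2::real)^K < f N"
      using real_arch_pow_inv[OF pos[of N], of "1/2"] by auto
    then have "N < C K" using iff[of K N] by (simp add: power_one_over)
    then have "(\<Sum>k\<le>N. f k) \<le> (\<Sum>n<C K. f n)"
      using pos less_imp_le by (intro sum_mono2) auto
    also have "\<dots> \<le> f 0 * real (C 0) + (\<Sum>k<K. c k)" by (rule key)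
    also have "(\<Sum>k<K. c k) \<le> suminf c" by (rule sum_le_suminf[OF sc]) (use c_nn in auto)
    finally show "(\<Sum>k\<le>N. f k) \<le> f 0 * real (C 0) + suminf c" by simp
  qed
qed



lemma pw_two: "(1 / 2 ^ m :: real) powr (-\<theta>) = (2 powr \<theta>) ^ m"
proof -
  have a: "(2::real) ^ m = 2 powr (real m)" by (simp add: powr_realpow)
  have "(1 / 2 ^ m :: real) powr (-\<theta>) = (2 ^ m) powr \<theta>"
    by (simp add: powr_minus_divide powr_divide)
  also have "\<dots> = (2 powr \<theta>) powr (real m)" unfolding a by (simp add: powr_powr mult.commute)
  also have "\<dots> = (2 powr \<theta>) ^ m" by (simp add: powr_realpow)
  finally show ?thesis .
qed

lemma PPP_AE_summable:
  assumes "ranked_PPP M \<theta> u" "0 < \<theta>" "\<theta> < 1"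
  shows "AE \<omega> in M. summable (u \<omega>)"
proof -
  interpret prob_space M by (rule PPP_prob[OF assms(1)])
  define Z where "Z \<omega> = (\<Sum>k. ennreal ((1/2)^k * real (pcount (u \<omega>) {1/2^Suc k<..})))" for \<omega>
  have cm: "(\<lambda>\<omega>. pcount (u \<omega>) {1/2^Suc k<..}) \<in> measurable M (count_space UNIV)" for k
    by (rule PPP_count_meas[OF assms(1), of "1/2^Suc k"]) auto
  have tm: "(\<lambda>\<omega>. ennreal ((1/2)^k * real (pcount (u \<omega>) {1/2^Suc k<..}))) \<in> borel_measurable M" for k
    using measurable_compose[OF cm[of k], of "\<lambda>n. ennreal ((1/2)^k * real n)" borel] by simp
  have Zm: "Z \<in> borel_measurable M"
    unfolding Z_def using tm by (rule borel_measurable_suminf_order)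
  define q where "q = 2 powr \<theta> / 2"
  have q: "0 \<le> q" "q < 1"
  proof -
    show "0 \<le> q" by (simp add: q_def)
    have "(2::real) powr \<theta> < 2 powr 1" using assms by (intro powr_less_mono) auto
    then show "q < 1" by (simp add: q_def)
  qed
  have trm: "(1/2)^k * (1 / 2 ^ Suc k) powr (-\<theta>) = 2 powr \<theta> * q^k" for k
    unfolding pw_two q_def by (simp add: power_divide field_simps)
  have "(\<integral>\<^sup>+\<omega>. Z \<omega> \<partial>M) = (\<Sum>k. \<integral>\<^sup>+\<omega>. ennreal ((1/2)^k * real (pcount (u \<omega>) {1/2^Suc k<..})) \<partial>M)"
    unfolding Z_def by (rule nn_integral_suminf) (rule tm)
  also have "\<dots> = (\<Sum>k. ennreal (2 powr \<theta> * q^k))"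
  proof (rule suminf_cong)
    fix k
    have "(\<integral>\<^sup>+\<omega>. ennreal ((1/2)^k * real (pcount (u \<omega>) {1/2^Suc k<..})) \<partial>M)
       = (\<integral>\<^sup>+\<omega>. ennreal ((1/2)^k) * ennreal (real (pcount (u \<omega>) {1/2^Suc k<..})) \<partial>M)"
      by (simp add: ennreal_mult)
    also have "\<dots> = ennreal ((1/2)^k) * (\<integral>\<^sup>+\<omega>. ennreal (real (pcount (u \<omega>) {1/2^Suc k<..})) \<partial>M)"
      using measurable_compose[OF cm[of k], of "\<lambda>n. ennreal (real n)" borel]
      by (intro nn_integral_cmult) simp
    also have "\<dots> = ennreal ((1/2)^k) * ennreal (measure (PD_intensity \<theta>) {1/2^Suc k<..})"
      by (subst PPP_mean[OF assms(1), of "1/2^Suc k"]) auto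
    also have "\<dots> = ennreal ((1/2)^k * (1 / 2 ^ Suc k) powr (-\<theta>))"
      using assms by (simp add: PPP_tail_measure ennreal_mult)
    finally show "(\<integral>\<^sup>+\<omega>. ennreal ((1/2)^k * real (pcount (u \<omega>) {1/2^Suc k<..})) \<partial>M) = ennreal (2 powr \<theta> * q^k)"
      unfolding trm .
  qed
  also have "\<dots> \<noteq> \<infinity>"
  proof -
    have "summable (\<lambda>k. 2 powr \<theta> * q^k)" using q by (intro summable_mult summable_geometric) auto
    moreover have "0 \<le> 2 powr \<theta> * q^k" for k using q by simp
    ultimately have "(\<Sum>k. ennreal (2 powr \<theta> * q^k)) \<noteq> top" by (intro ennreal_suminf_neq_top)
    then show ?thesis by simp
  qed
  finally have "AE \<omega> in M. Z \<omega> \<noteq> \<infinity>" by (intro nn_integral_PInf_AE Zm)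
  then show ?thesis
  proof (rule AE_mp[OF _ AE_I2], intro impI)
    fix \<omega> assume \<omega>: "\<omega> \<in> space M" and Z: "Z \<omega> \<noteq> \<infinity>"
    show "summable (u \<omega>)"
    proof (rule summable_from_counts)
      show "u \<omega> (Suc n) < u \<omega> n" for n using PPP_pw[OF assms(1) \<omega>] by blast
      show "0 < u \<omega> n" for n by (rule PPP_pos[OF assms(1) \<omega>])
      show "u \<omega> \<longlonglongrightarrow> 0" using PPP_pw[OF assms(1) \<omega>] by blast
      show "(\<Sum>k. ennreal ((1/2)^k * real (pcount (u \<omega>) {1/2^Suc k<..}))) \<noteq> \<infinity>"
        using Z unfolding Z_def by assumption
    qed
  qed
qed



theorem mainTheorem16:
  fixes M :: "'a measure" and \<theta> \<delta> :: real and u :: "'a \<Rightarrow> nat \<Rightarrow> real" and n :: nat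
  assumes "0 < \<theta>" "\<theta> < 1"
    and "ranked_PPP M \<theta> u"
    and "0 < \<delta>" "\<delta> < 1"
    and "1 \<le> n"
  shows "(\<integral>\<omega>. PD_coord (u \<omega>) n \<partial>M)
         \<le> exp (- real n * \<delta>\<^sup>2 / 8)
           + Gamma (1 + 1 / \<theta>) / (Gamma (1 - \<theta>) powr (1 / \<theta>))
             * (1 + \<delta>) powr (1 / \<theta>) * real n powr (- 1 / \<theta>)"
proof -
  note PPP = assms(3)
  interpret prob_space M by (rule PPP_prob[OF PPP])
  have [measurable]: "(\<lambda>\<omega>. u \<omega> m) \<in> borel_measurable M" for m by (rule PPP_meas[OF PPP])
  define t where "t = ((1 + \<delta>) / real n) powr (1/\<theta>)"
  have t: "0 < t" using assms by (simp add: t_def)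
  define C where "C = Gamma (1 + 1/\<theta>) * Gamma (1 - \<theta>) powr (-1/\<theta>)"
  have C: "0 \<le> C"
  proof -
    have "0 < 1 + 1/\<theta>" using assms by (simp add: add_pos_pos)
    then have "0 \<le> Gamma (1 + 1/\<theta>)" using Gamma_real_pos less_imp_le by blast
    then show ?thesis by (simp add: C_def)
  qed
  define E where "E = {\<omega>\<in>space M. t < u \<omega> (n - 1)}"
  have Em[measurable]: "E \<in> sets M" unfolding E_def by measurable
  define g where "g \<omega> = (if summable (u \<omega>) then 1 / suminf (u \<omega>) else 0)" for \<omega>
  have gm: "g \<in> borel_measurable M"
    unfolding g_def by (rule PPP_W_meas[OF PPP, of "\<lambda>x. 1 / x"]) simp
  have vm: "(\<lambda>\<omega>. PD_coord (u \<omega>) n) \<in> borel_measurable M"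
    unfolding PD_coord_def by measurable
  have AEs: "AE \<omega> in M. summable (u \<omega>)" by (rule PPP_AE_summable[OF PPP assms(1,2)])
  have pw: "0 \<le> PD_coord (u \<omega>) n \<and> ennreal (PD_coord (u \<omega>) n) \<le> indicator E \<omega> + ennreal t * ennreal (g \<omega>)"
    if \<omega>: "\<omega> \<in> space M" and s: "summable (u \<omega>)" for \<omega>
  proof -
    have upos: "0 < u \<omega> m" for m by (rule PPP_pos[OF PPP \<omega>])
    have Spos: "0 < suminf (u \<omega>)" using s upos by (intro suminf_pos) auto
    have "sum (u \<omega>) {n - 1} \<le> suminf (u \<omega>)"
      by (rule sum_le_suminf[OF s]) (auto intro: less_imp_le[OF upos])
    then have ule: "u \<omega> (n - 1) \<le> suminf (u \<omega>)" by simp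
    have v: "PD_coord (u \<omega>) n = u \<omega> (n - 1) / suminf (u \<omega>)" by (simp add: PD_coord_def)
    have v0: "0 \<le> PD_coord (u \<omega>) n" unfolding v
      by (intro divide_nonneg_nonneg less_imp_le[OF upos] less_imp_le[OF Spos])
    have gw: "g \<omega> = 1 / suminf (u \<omega>)" using s by (simp add: g_def)
    show ?thesis
    proof (cases "t < u \<omega> (n - 1)")
      case True
      have "PD_coord (u \<omega>) n \<le> 1" unfolding v using ule Spos by (simp add: divide_le_eq_1)
      then have "ennreal (PD_coord (u \<omega>) n) \<le> 1" by (simp add: ennreal_le_1)
      also have "1 = indicator E \<omega>" using True \<omega> by (simp add: E_def)
      also have "indicator E \<omega> \<le> indicator E \<omega> + ennreal t * ennreal (g \<omega>)" by simp
      finally show ?thesis using v0 by simp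
    next
      case False
      have "u \<omega> (n - 1) / suminf (u \<omega>) \<le> t / suminf (u \<omega>)"
        using False Spos by (intro divide_right_mono) auto
      then have "PD_coord (u \<omega>) n \<le> t * g \<omega>" unfolding v gw by simp
      then have "ennreal (PD_coord (u \<omega>) n) \<le> ennreal (t * g \<omega>)" by (rule ennreal_leI)
      also have "\<dots> = ennreal t * ennreal (g \<omega>)"
        using t Spos gw by (intro ennreal_mult) auto
      also have "\<dots> \<le> indicator E \<omega> + ennreal t * ennreal (g \<omega>)" by simp
      finally show ?thesis using v0 by simp
    qed
  qed
  have AE1: "AE \<omega> in M. 0 \<le> PD_coord (u \<omega>) n \<and> ennreal (PD_coord (u \<omega>) n) \<le> indicator E \<omega> + ennreal t * ennreal (g \<omega>)"
    by (rule AE_mp[OF AEs AE_I2]) (use pw in blast)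
  have AE2: "AE \<omega> in M. 0 \<le> PD_coord (u \<omega>) n" using AE1 by eventually_elim blast
  have AE3: "AE \<omega> in M. ennreal (PD_coord (u \<omega>) n) \<le> indicator E \<omega> + ennreal t * ennreal (g \<omega>)"
    using AE1 by eventually_elim blast
  have "(\<integral>\<omega>. PD_coord (u \<omega>) n \<partial>M) = enn2real (\<integral>\<^sup>+\<omega>. ennreal (PD_coord (u \<omega>) n) \<partial>M)"
    by (rule integral_eq_nn_integral[OF vm AE2])
  also have "\<dots> \<le> exp (- real n * \<delta>\<^sup>2 / 8) + t * C"
  proof (rule enn2real_leI)
    show "0 \<le> exp (- real n * \<delta>\<^sup>2 / 8) + t * C" using t C by simp
    have "(\<integral>\<^sup>+\<omega>. ennreal (PD_coord (u \<omega>) n) \<partial>M) \<le> (\<integral>\<^sup>+\<omega>. indicator E \<omega> + ennreal t * ennreal (g \<omega>) \<partial>M)"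
      by (rule nn_integral_mono_AE[OF AE3])
    also have "\<dots> = (\<integral>\<^sup>+\<omega>. indicator E \<omega> \<partial>M) + (\<integral>\<^sup>+\<omega>. ennreal t * ennreal (g \<omega>) \<partial>M)"
      using gm by (intro nn_integral_add) auto
    also have "(\<integral>\<^sup>+\<omega>. ennreal t * ennreal (g \<omega>) \<partial>M) = ennreal t * (\<integral>\<^sup>+\<omega>. ennreal (g \<omega>) \<partial>M)"
      using gm by (intro nn_integral_cmult) auto
    also have "(\<integral>\<^sup>+\<omega>. indicator E \<omega> \<partial>M) = emeasure M E" by simp
    also have "emeasure M E \<le> ennreal (exp (- real n * \<delta>\<^sup>2 / 8))"
      unfolding E_def t_def by (rule tail_prob[OF PPP assms(1,4,5,6)])
    also have "(\<integral>\<^sup>+\<omega>. ennreal (g \<omega>) \<partial>M) \<le> ennreal C"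
      unfolding g_def C_def by (rule inv_sum_bound[OF PPP assms(1,2)])
    finally have "(\<integral>\<^sup>+\<omega>. ennreal (PD_coord (u \<omega>) n) \<partial>M) \<le> ennreal (exp (- real n * \<delta>\<^sup>2 / 8)) + ennreal t * ennreal C"
      by (simp add: add_left_mono mult_left_mono)
    also have "\<dots> = ennreal (exp (- real n * \<delta>\<^sup>2 / 8) + t * C)"
      using t C by (simp add: ennreal_mult ennreal_plus)
    finally show "(\<integral>\<^sup>+\<omega>. ennreal (PD_coord (u \<omega>) n) \<partial>M) \<le> ennreal (exp (- real n * \<delta>\<^sup>2 / 8) + t * C)" .
  qed
  also have "t * C = Gamma (1 + 1 / \<theta>) / (Gamma (1 - \<theta>) powr (1 / \<theta>))
             * (1 + \<delta>) powr (1 / \<theta>) * real n powr (- 1 / \<theta>)"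
  proof -
    have a: "Gamma (1 - \<theta>) powr (-1/\<theta>) = 1 / Gamma (1 - \<theta>) powr (1/\<theta>)"
      by (simp add: powr_minus_divide[symmetric])
    have b: "real n powr (-1/\<theta>) = 1 / real n powr (1/\<theta>)"
      by (simp add: powr_minus_divide[symmetric])
    have c: "t = (1 + \<delta>) powr (1/\<theta>) / real n powr (1/\<theta>)"
      unfolding t_def by (rule powr_divide)
    show ?thesis unfolding C_def a b c by (simp add: mult_ac)
  qed
  finally show ?thesis .
qed

end
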